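(* Let $h,m$ be positive integers with $h=1$ or $\omega(m)=1$, and let $c$ be a positive integer such that no $\mathrm{CC}^h[m]$-circuit computes the $n$-ary conjunction $\mathrm{AND}_n$ for any $n>c$. Let $L\subseteq\{0,1\}^*$ be a language recognizable by $\mathrm{CC}^h[m]$-circuits (i.e. for every $n$ some $\mathrm{CC}^h[m]$-circuit with $n$ inputs outputs $1$ exactly on the words of $L$ of length $n$). Then for every $n$ the number of words of length $n$ in $L$ is either $0$ or at least $2^{n-c}$.
   Context: For an integer $m\ge 1$ and $A\subseteq\{0,\dots,m-1\}$, a gate $\mathrm{MOD}_m^A$ takes finitely many Boolean inputs (counted with multiplicity) and outputs $1$ if their sum modulo $m$ lies in $A$, and $0$ otherwise. A $\mathrm{CC}^h[m]$-circuit is a depth-$h$ Boolean circuit all of whose gates are of the form $\mathrm{MOD}_m^A$ ($A$ may vary between gates), with Boolean variable inputs (constants allowed) and multiple wires allowed. $\omega(m)$ is the number of distinct prime divisors of $m$. *)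

theory Defs
  imports Complex_Main "HOL-Computational_Algebra.Primes"
begin

text \<open>A circuit is a tree (DAG unfolded):
  an input variable (index), a Boolean constant, or a gate MOD_m^A whose
  inputs are given as a list (so multiple wires are allowed).\<close>

datatype circ = Var nat | Const bool | Gate "nat set" "circ list"

fun eval_circ :: "nat \<Rightarrow> circ \<Rightarrow> bool list \<Rightarrow> bool" where
  "eval_circ m (Var i) x = x ! i"
| "eval_circ m (Const b) x = b"
| "eval_circ m (Gate A cs) x =
     ((sum_list (map (\<lambda>c. if eval_circ m c x then 1 else 0) cs) :: nat) mod m \<in> A)"

fun depth :: "circ \<Rightarrow> nat" where
  "depth (Var i) = 0"
| "depth (Const b) = 0"
| "depth (Gate A cs) = Suc (fold max (map depth cs) 0)"

fun wf_circ :: "nat \<Rightarrow> nat \<Rightarrow> circ \<Rightarrow> bool" where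
  "wf_circ m n (Var i) = (i < n)"
| "wf_circ m n (Const b) = True"
| "wf_circ m n (Gate A cs) = (A \<subseteq> {0..<m} \<and> (\<forall>c\<in>set cs. wf_circ m n c))"

definition CC_circuit :: "nat \<Rightarrow> nat \<Rightarrow> nat \<Rightarrow> circ \<Rightarrow> bool" where
  "CC_circuit h m n C \<longleftrightarrow> wf_circ m n C \<and> depth C \<le> h"

definition computes :: "nat \<Rightarrow> nat \<Rightarrow> circ \<Rightarrow> (bool list \<Rightarrow> bool) \<Rightarrow> bool" where
  "computes m n C f \<longleftrightarrow> (\<forall>x. length x = n \<longrightarrow> eval_circ m C x = f x)"

definition omega :: "nat \<Rightarrow> nat" where
  "omega m = card (prime_factors m)"

definition CC_recognizable :: "nat \<Rightarrow> nat \<Rightarrow> bool list set \<Rightarrow> bool" where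
  "CC_recognizable h m L \<longleftrightarrow>
     (\<forall>n. \<exists>C. CC_circuit h m n C \<and> computes m n C (\<lambda>x. x \<in> L))"

end

theory Submission
  imports Defs
begin

definition ind :: "bool \<Rightarrow> nat" where "ind b = (if b then 1 else 0)"

lemma fold_max_le: "fold max (map f xs) (0::nat) \<le> k \<longleftrightarrow> (\<forall>x\<in>set xs. f x \<le> k)"
proof -
  have "fold max (map f xs) (0::nat) = Max (set (0 # map f xs))"
    by (simp only: Max.set_eq_fold)
  then show ?thesis by auto
qed

lemma sum_list_mod_cong:
  assumes "\<forall>c\<in>set cs. f c mod m = g c mod m"
  shows "(\<Sum>c\<leftarrow>cs. f c) mod m = (\<Sum>c\<leftarrow>cs. (g c :: nat)) mod m"
  using assms
proof (induction cs)
  case Nil then show ?case by simp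
next
  case (Cons a cs)
  then have h1: "f a mod m = g a mod m" and h2: "(\<Sum>c\<leftarrow>cs. f c) mod m = (\<Sum>c\<leftarrow>cs. g c) mod m"
    by auto
  show ?case using mod_add_cong[OF h1 h2] by simp
qed

fun trl :: "nat \<Rightarrow> (nat \<Rightarrow> bool) \<Rightarrow> circ \<Rightarrow> circ list" where
  "trl m fl (Var i) = (if fl i then Const True # replicate (m - 1) (Var i) else [Var i])"
| "trl m fl (Const b) = [Const b]"
| "trl m fl (Gate A cs) = [Gate A (concat (map (trl m fl) cs))]"

fun restr :: "nat \<Rightarrow> bool \<Rightarrow> circ \<Rightarrow> circ" where
  "restr i b (Var j) = (if j < i then Var j else if j = i then Const b else Var (j - 1))"
| "restr i b (Const b') = Const b'"
| "restr i b (Gate A cs) = Gate A (map (restr i b) cs)"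

lemma trl_var:
  assumes "m > 0" and "\<forall>i<n. y ! i = (x ! i \<noteq> fl i)"
  shows "wf_circ m n (Var i) \<Longrightarrow>
    (\<Sum>d\<leftarrow>trl m fl (Var i). ind (eval_circ m d x)) mod m = ind (eval_circ m (Var i) y) mod m"
proof (cases "fl i")
    case True
    assume Var: "wf_circ m n (Var i)"
    have "(\<Sum>d\<leftarrow>trl m fl (Var i). ind (eval_circ m d x)) = 1 + (m - 1) * ind (x ! i)"
      using True by (simp add: ind_def sum_list_replicate)
    moreover have "y ! i = (\<not> x ! i)" using Var assms(2) True by auto
    ultimately show ?thesis using assms(1) by (auto simp: ind_def)
  next
    case False
    assume Var: "wf_circ m n (Var i)"
    have "y ! i = x ! i" using Var assms(2) False by auto
    then show ?thesis using False by simp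
qed

lemma trl_sem:
  assumes "m > 0" and "\<forall>i<n. y ! i = (x ! i \<noteq> fl i)"
  shows "wf_circ m n c \<Longrightarrow>
    (\<Sum>d\<leftarrow>trl m fl c. ind (eval_circ m d x)) mod m = ind (eval_circ m c y) mod m"
proof (induction c)
  case (Var i)
  then show ?case using trl_var[OF assms] by blast
next
  case (Const b)
  then show ?case by simp
next
  case (Gate A cs)
  have ch: "\<forall>c\<in>set cs. (\<Sum>d\<leftarrow>trl m fl c. ind (eval_circ m d x)) mod m = ind (eval_circ m c y) mod m"
    using Gate by auto
  have e1: "(\<Sum>d\<leftarrow>concat (map (trl m fl) cs). ind (eval_circ m d x))
      = (\<Sum>c\<leftarrow>cs. (\<Sum>d\<leftarrow>trl m fl c. ind (eval_circ m d x)))"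
    by (induction cs) auto
  have e2: "(\<Sum>c\<leftarrow>cs. (\<Sum>d\<leftarrow>trl m fl c. ind (eval_circ m d x))) mod m = (\<Sum>c\<leftarrow>cs. ind (eval_circ m c y)) mod m"
    by (rule sum_list_mod_cong[OF ch])
  have "eval_circ m (Gate A (concat (map (trl m fl) cs))) x = eval_circ m (Gate A cs) y"
    using e1 e2 by (simp add: ind_def comp_def)
  then show ?case by simp
qed

lemma trl_gate_sem:
  assumes "m > 0" and "\<forall>i<n. y ! i = (x ! i \<noteq> fl i)" and "wf_circ m n (Gate A cs)"
  shows "eval_circ m (hd (trl m fl (Gate A cs))) x = eval_circ m (Gate A cs) y"
proof -
  have ch: "\<forall>c\<in>set cs. (\<Sum>d\<leftarrow>trl m fl c. ind (eval_circ m d x)) mod m = ind (eval_circ m c y) mod m"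
    using trl_sem[OF assms(1,2)] assms(3) by auto
  have e1: "(\<Sum>d\<leftarrow>concat (map (trl m fl) cs). ind (eval_circ m d x))
      = (\<Sum>c\<leftarrow>cs. (\<Sum>d\<leftarrow>trl m fl c. ind (eval_circ m d x)))"
    by (induction cs) auto
  have e2: "(\<Sum>c\<leftarrow>cs. (\<Sum>d\<leftarrow>trl m fl c. ind (eval_circ m d x))) mod m = (\<Sum>c\<leftarrow>cs. ind (eval_circ m c y)) mod m"
    by (rule sum_list_mod_cong[OF ch])
  show ?thesis
    using e1 e2 by (simp add: ind_def comp_def)
qed

lemma trl_wf: "wf_circ m n c \<Longrightarrow> \<forall>d\<in>set (trl m fl c). wf_circ m n d"
  by (induction c) auto

lemma trl_depth: "\<forall>d\<in>set (trl m fl c). depth d \<le> depth c"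
proof (induction c)
  case (Gate A cs)
  have "\<forall>d\<in>set (concat (map (trl m fl) cs)). depth d \<le> fold max (map depth cs) 0"
  proof
    fix d assume "d \<in> set (concat (map (trl m fl) cs))"
    then obtain c where c: "c \<in> set cs" "d \<in> set (trl m fl c)" by auto
    then have "depth d \<le> depth c" using Gate by auto
    moreover have "depth c \<le> fold max (map depth cs) 0"
      using fold_max_le[of depth cs "fold max (map depth cs) 0"] c(1) by auto
    ultimately show "depth d \<le> fold max (map depth cs) 0" by simp
  qed
  then have "fold max (map depth (concat (map (trl m fl) cs))) 0 \<le> fold max (map depth cs) 0"
    using fold_max_le by blast
  then show ?case by simp
qed auto

lemma restr_sem:
  "i \<le> length x \<Longrightarrow> wf_circ m (Suc (length x)) c \<Longrightarrow> eval_circ m (restr i b c) x = eval_circ m c (take i x @ b # drop i x)"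
proof (induction c)
  case (Var j)
  then show ?case by (auto simp: nth_append min_def)
next
  case (Gate A cs)
  have "\<forall>c\<in>set cs. eval_circ m (restr i b c) x = eval_circ m c (take i x @ b # drop i x)"
    using Gate by auto
  then have "map (\<lambda>c. if eval_circ m (restr i b c) x then 1 else 0) cs
     = map (\<lambda>c. if eval_circ m c (take i x @ b # drop i x) then 1 else (0::nat)) cs"
    by (intro map_cong) auto
  then show ?case by (simp add: o_def del: map_eq_conv)
qed auto

lemma restr_wf: "wf_circ m (Suc n) c \<Longrightarrow> i \<le> n \<Longrightarrow> wf_circ m n (restr i b c)"
  by (induction c) auto

lemma restr_depth: "depth (restr i b c) = depth c"
proof (induction c)
  case (Gate A cs)
  then have "map depth (map (restr i b) cs) = map depth cs" by auto
  then show ?case by (metis depth.simps(3) restr.simps(3))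
qed auto


lemma single_case:
  assumes m0: "m > 0" and c0: "c > 0"
    and noand: "\<forall>n > c. \<not> (\<exists>C. CC_circuit h m n C \<and> computes m n C (\<lambda>x. \<forall>i<n. x ! i))"
    and CC: "CC_circuit h m n C"
    and S: "S = {x. length x = n \<and> eval_circ m C x}"
    and wS: "w \<in> S" and uniq: "\<forall>x\<in>S. x = w"
  shows "(2::real) powi (int n - int c) \<le> real (card S)"
proof -
  have lw: "length w = n" and ew: "eval_circ m C w" using wS S by auto
  have sem: "\<And>x. length x = n \<Longrightarrow> eval_circ m C x \<longleftrightarrow> x = w"
    using uniq S ew by auto
  have wf: "wf_circ m n C" and dp: "depth C \<le> h" using CC by (auto simp: CC_circuit_def)
  have "n \<le> c"
  proof (rule ccontr)
    assume "\<not> n \<le> c"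
    then have nc: "n > c" and n2: "n \<ge> 2" using c0 by auto
    show False
    proof (cases C)
      case (Var i)
      then have i: "i < n" using wf by simp
      define j where "j = (if i = 0 then 1 else (0::nat))"
      have j: "j < n" "j \<noteq> i" using n2 by (auto simp: j_def)
      define x where "x = w[j := (\<not> w ! j)]"
      have lx: "length x = n" using lw by (simp add: x_def)
      have "w ! i" using ew Var by simp
      then have "eval_circ m C x" using Var j by (simp add: x_def)
      then have "x = w" using sem lx by blast
      moreover have "x ! j \<noteq> w ! j" using j lw by (simp add: x_def)
      ultimately show False by simp
    next
      case (Const b)
      define x where "x = w[0 := (\<not> w ! 0)]"
      have lx: "length x = n" using lw by (simp add: x_def)
      have "eval_circ m C x" using ew Const by simp
      then have "x = w" using sem lx by blast
      moreover have "x ! 0 \<noteq> w ! 0" using n2 lw by (simp add: x_def)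
      ultimately show False by simp
    next
      case (Gate A cs)
      define fl where "fl = (\<lambda>i. \<not> w ! i)"
      define C' where "C' = hd (trl m fl C)"
      have "C' \<in> set (trl m fl C)" using Gate by (simp add: C'_def)
      then have "CC_circuit h m n C'"
        using trl_wf[OF wf, of fl] trl_depth[of m fl C] dp by (auto simp: CC_circuit_def)
      moreover have "computes m n C' (\<lambda>x. \<forall>i<n. x ! i)"
        unfolding computes_def
      proof (intro allI impI)
        fix x :: "bool list" assume lx: "length x = n"
        define y where "y = map (\<lambda>i. x ! i \<noteq> fl i) [0..<n]"
        have y: "\<forall>i<n. y ! i = (x ! i \<noteq> fl i)" by (simp add: y_def)
        have ly: "length y = n" by (simp add: y_def)
        have "eval_circ m C' x = eval_circ m C y"
          using trl_gate_sem[OF m0 y] wf Gate by (simp add: C'_def)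
        also have "\<dots> = (y = w)" using sem ly by blast
        also have "\<dots> = (\<forall>i<n. y ! i = w ! i)" using ly lw by (simp add: list_eq_iff_nth_eq)
        also have "\<dots> = (\<forall>i<n. x ! i)"
        proof -
          have pt: "(y ! i = w ! i) = x ! i" if "i < n" for i
            using y that by (cases "x ! i"; cases "w ! i") (auto simp: fl_def)
          show ?thesis using pt by blast
        qed
        finally show "eval_circ m C' x = (\<forall>i<n. x ! i)" .
      qed
      moreover have "\<not> (\<exists>C. CC_circuit h m n C \<and> computes m n C (\<lambda>x. \<forall>i<n. x ! i))"
        using noand nc by simp
      ultimately show False by blast
    qed
  qed
  have "S = {w}" using uniq wS by blast
  then have "real (card S) = 1" by simp
  moreover have "(2::real) powi (int n - int c) \<le> 2 powi 0"
    by (rule power_int_increasing) (use \<open>n \<le> c\<close> in auto)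
  ultimately show ?thesis by simp
qed


lemma count_lemma:
  assumes m0: "m > 0" and c0: "c > 0"
    and noand: "\<forall>n > c. \<not> (\<exists>C. CC_circuit h m n C \<and> computes m n C (\<lambda>x. \<forall>i<n. x ! i))"
  shows "CC_circuit h m n C \<Longrightarrow> {x. length x = n \<and> eval_circ m C x} \<noteq> {} \<Longrightarrow>
    (2::real) powi (int n - int c) \<le> real (card {x. length x = n \<and> eval_circ m C x})"
proof (induction n arbitrary: C)
  case 0
  define S where "S = {x. length x = (0::nat) \<and> eval_circ m C x}"
  obtain w where w: "w \<in> S" using 0 S_def by auto
  have "\<forall>x\<in>S. x = w" using w by (auto simp: S_def)
  then show ?case using single_case[OF m0 c0 noand 0(1) S_def w] by (simp add: S_def)
next
  case (Suc k C)
  define n where "n = Suc k"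
  define S where "S = {x. length x = n \<and> eval_circ m C x}"
  obtain w where w: "w \<in> S" using Suc.prems(2) unfolding S_def n_def by blast
  have wf: "wf_circ m n C" and dp: "depth C \<le> h" using Suc(2) by (auto simp: CC_circuit_def n_def)
  have finS: "finite S"
  proof (rule finite_subset[OF _ finite_list_length[of n]])
    show "S \<subseteq> {xs. length xs = n}" unfolding S_def by blast
  qed
  have lw: "length w = n" using w by (simp add: S_def)
  have goal: "(2::real) powi (int n - int c) \<le> real (card S)"
  proof (cases "\<exists>i<n. \<exists>x\<in>S. x ! i \<noteq> w ! i")
    case False
    have "\<forall>x\<in>S. x = w"
    proof
      fix x assume xS: "x \<in> S"
      then have lx: "length x = n" by (simp add: S_def)
      show "x = w"
      proof (rule nth_equalityI)
        show "length x = length w" using lx lw by simp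
        fix j assume "j < length x"
        then show "x ! j = w ! j" using False xS lx by blast
      qed
    qed
    moreover have CCn: "CC_circuit h m n C" using Suc(2) by (simp add: n_def)
    ultimately show ?thesis using single_case[OF m0 c0 noand CCn S_def w] by blast
  next
    case True
    then obtain i x1 where i: "i < n" and x1: "x1 \<in> S" "x1 ! i \<noteq> w ! i" by blast
    have ik: "i \<le> k" using i n_def by simp
    define g where "g = (\<lambda>b (y::bool list). take i y @ b # drop i y)"
    have key: "(2::real) powi (int k - int c) \<le> real (card {x\<in>S. x ! i = b})"
      if ex: "\<exists>x\<in>S. x ! i = b" for b
    proof -
      define T where "T = {y. length y = k \<and> eval_circ m (restr i b C) y}"
      have CCr: "CC_circuit h m k (restr i b C)"
        using restr_wf[of m k C i b] wf ik dp restr_depth[of i b C]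
        by (simp add: CC_circuit_def n_def)
      have gsem: "eval_circ m (restr i b C) y = eval_circ m C (g b y)" if ly: "length y = k" for y
        using restr_sem[where i=i and x=y and b=b and c=C] ly ik wf by (simp add: g_def n_def)
      have gT: "g b y \<in> {x\<in>S. x ! i = b}" if "y \<in> T" for y
      proof -
        have ly: "length y = k" and ev: "eval_circ m (restr i b C) y" using that by (simp_all add: T_def)
        have l: "length (g b y) = n" using ly ik by (simp add: g_def n_def)
        have e: "eval_circ m C (g b y)" using gsem[OF ly] ev by simp
        have "g b y ! i = b" using ly ik by (simp add: g_def nth_append)
        then show ?thesis using l e by (simp add: S_def)
      qed
      obtain x where x: "x \<in> S" "x ! i = b" using ex by blast
      have lx: "length x = n" using x(1) by (simp add: S_def)
      have ex_x: "eval_circ m C x" using x(1) by (simp add: S_def)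
      define y where "y = take i x @ drop (Suc i) x"
      have ly: "length y = k" using lx i n_def by (simp add: y_def)
      have gy: "g b y = x"
        using i lx x(2) id_take_nth_drop[of i x] by (simp add: g_def y_def min_def)
      have "y \<in> T"
        using gsem[OF ly] gy ex_x ly by (simp add: T_def)
      then have Tne: "T \<noteq> {}" by blast
      have IH: "(2::real) powi (int k - int c) \<le> real (card T)"
        using Suc.IH[OF CCr] Tne by (simp add: T_def)
      have inj: "inj_on (g b) T"
      proof
        fix y1 y2 assume y1: "y1 \<in> T" and y2: "y2 \<in> T" and eq: "g b y1 = g b y2"
        have l: "length y1 = k" "length y2 = k" using y1 y2 by (simp_all add: T_def)
        have e2: "take i y1 @ b # drop i y1 = take i y2 @ b # drop i y2" using eq by (simp add: g_def)
        have "length (take i y1) = length (take i y2)" using l by simp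
        then have "take i y1 = take i y2 \<and> b # drop i y1 = b # drop i y2"
          by (rule iffD1[OF append_eq_append_conv[OF disjI1] e2])
        then have "take i y1 = take i y2" "drop i y1 = drop i y2" by simp_all
        then show "y1 = y2" by (metis append_take_drop_id)
      qed
      have finSb: "finite {x\<in>S. x ! i = b}" by (rule finite_subset[OF _ finS]) blast
      have "card T \<le> card {x\<in>S. x ! i = b}"
        by (rule card_inj_on_le[OF inj _ finSb]) (use gT in blast)
      then show ?thesis using IH by linarith
    qed
    have exT: "\<exists>x\<in>S. x ! i = True" and exF: "\<exists>x\<in>S. x ! i = False"
    proof -
      show "\<exists>x\<in>S. x ! i = True"
      proof (cases "w ! i")
        case True then show ?thesis using w by blast
      next
        case False then show ?thesis using x1 by (intro bexI[of _ x1]) simp_all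
      qed
      show "\<exists>x\<in>S. x ! i = False"
      proof (cases "w ! i")
        case False then show ?thesis using w by (intro bexI[of _ w]) simp_all
      next
        case True then show ?thesis using x1 by (intro bexI[of _ x1]) simp_all
      qed
    qed
    have split: "S = {x\<in>S. x ! i = True} \<union> {x\<in>S. x ! i = False}" by blast
    have "card S = card {x\<in>S. x ! i = True} + card {x\<in>S. x ! i = False}"
    proof (subst split, rule card_Un_disjoint)
      show "finite {x\<in>S. x ! i = True}" by (rule finite_subset[OF _ finS]) blast
      show "finite {x\<in>S. x ! i = False}" by (rule finite_subset[OF _ finS]) blast
      show "{x\<in>S. x ! i = True} \<inter> {x\<in>S. x ! i = False} = {}" by blast
    qed
    then have cS: "real (card S) = real (card {x\<in>S. x ! i = True}) + real (card {x\<in>S. x ! i = False})"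
      by simp
    have pw: "(2::real) powi (int n - int c) = 2 * 2 powi (int k - int c)"
    proof -
      have "int n - int c = (int k - int c) + 1" by (simp add: n_def)
      moreover have "(2::real) powi (int k - int c + 1) = 2 * 2 powi (int k - int c)"
        by (rule power_int_add_1') simp
      ultimately show ?thesis by (simp only:)
    qed
    show ?thesis using key[OF exT] key[OF exF] cS pw by linarith
  qed
  then show ?case by (simp add: S_def n_def)
qed

theorem corollary2p5:
  fixes h m c :: nat and L :: "bool list set"
  assumes "h > 0" and "m > 0"
    and "h = 1 \<or> omega m = 1"
    and "c > 0"
    and "\<forall>n > c. \<not> (\<exists>C. CC_circuit h m n C \<and> computes m n C (\<lambda>x. \<forall>i<n. x ! i))"
    and "CC_recognizable h m L"
  shows "\<forall>n. card {x \<in> L. length x = n} = 0 \<or>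
             real (card {x \<in> L. length x = n}) \<ge> (2::real) powi (int n - int c)"
proof (intro allI)
  fix n
  obtain C where C: "CC_circuit h m n C" "computes m n C (\<lambda>x. x \<in> L)"
    using assms(6) unfolding CC_recognizable_def by blast
  have eq: "{x \<in> L. length x = n} = {x. length x = n \<and> eval_circ m C x}"
    using C(2) unfolding computes_def by blast
  show "card {x \<in> L. length x = n} = 0 \<or>
             real (card {x \<in> L. length x = n}) \<ge> (2::real) powi (int n - int c)"
  proof (cases "{x \<in> L. length x = n} = {}")
    case True
    then have "card {x \<in> L. length x = n} = 0" by (simp only: card.empty)
    then show ?thesis by (rule disjI1)
  next
    case False
    then have "{x. length x = n \<and> eval_circ m C x} \<noteq> {}" using eq by simp
    from count_lemma[OF assms(2) assms(4) assms(5) C(1) this]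
    show ?thesis using eq by simp
  qed
qed

end
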